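(* Let $A$ be a finite set and let $\rho\subseteq A^n$, $n\ge3$, be an essential key relation preserved by a near-unanimity operation. Then the pattern of $\rho$ is the trivial equivalence relation on $\{1,\dots,n\}$.
   Context: A near-unanimity operation is an $m$-ary operation $f$ on $A$ ($m\ge 3$) with $f(y,x,\dots,x)=f(x,y,x,\dots,x)=\dots=f(x,\dots,x,y)=x$ for all $x,y$; it preserves $\rho$ if applying it coordinatewise to any $m$ tuples of $\rho$ gives a tuple of $\rho$. A unary vector-function is a tuple $\Psi=(\psi_1,\dots,\psi_n)$ of maps $\psi_i:A\to A$ acting coordinatewise; it preserves $\rho$ if $\Psi(\rho)\subseteq\rho$. $\rho$ is a key relation if there is $\beta\in A^n\setminus\rho$ (a key tuple) such that every $\alpha\in A^n\setminus\rho$ is mapped to $\beta$ by some unary vector-function preserving $\rho$. $\rho$ is essential if it cannot be written as a conjunction of relations of smaller arities. The pattern of $\rho$: for $i\ne j$, $i\overset{\rho}{\sim}j$ iff there do NOT exist $a_1,\dots,a_n,b_i,b_j\in A$ with $(a_1,\dots,a_n)\notin\rho$ while the tuples obtained by replacing $a_i$ by $b_i$, replacing $a_j$ by $b_j$, and replacing both, all lie in $\rho$; and $i\overset{\rho}{\sim}i$ always. *)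

theory Defs
  imports Main
begin

text \<open>Tuples of length n over A are lists; coordinates are indexed 0..n-1
  (instead of 1..n).\<close>

definition tuples :: "'a set \<Rightarrow> nat \<Rightarrow> 'a list set" where
  "tuples A n = {xs. length xs = n \<and> set xs \<subseteq> A}"

definition near_unanimity :: "'a set \<Rightarrow> nat \<Rightarrow> ('a list \<Rightarrow> 'a) \<Rightarrow> bool" where
  "near_unanimity A m f \<longleftrightarrow> m \<ge> 3 \<and> (\<forall>xs\<in>tuples A m. f xs \<in> A) \<and>
     (\<forall>x\<in>A. \<forall>y\<in>A. \<forall>k<m. f ((replicate m x)[k := y]) = x)"

definition apply_op :: "nat \<Rightarrow> ('a list \<Rightarrow> 'a) \<Rightarrow> 'a list list \<Rightarrow> 'a list" where
  "apply_op n f rs = map (\<lambda>i. f (map (\<lambda>r. r ! i) rs)) [0..<n]"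

definition op_preserves :: "nat \<Rightarrow> nat \<Rightarrow> ('a list \<Rightarrow> 'a) \<Rightarrow> 'a list set \<Rightarrow> bool" where
  "op_preserves n m f \<rho> \<longleftrightarrow>
     (\<forall>rs. length rs = m \<and> set rs \<subseteq> \<rho> \<longrightarrow> apply_op n f rs \<in> \<rho>)"

definition uvf :: "'a set \<Rightarrow> nat \<Rightarrow> (nat \<Rightarrow> 'a \<Rightarrow> 'a) \<Rightarrow> bool" where
  "uvf A n \<psi> \<longleftrightarrow> (\<forall>i<n. \<psi> i ` A \<subseteq> A)"

definition apply_uvf :: "(nat \<Rightarrow> 'a \<Rightarrow> 'a) \<Rightarrow> 'a list \<Rightarrow> 'a list" where
  "apply_uvf \<psi> xs = map (\<lambda>i. \<psi> i (xs ! i)) [0..<length xs]"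

definition uvf_preserves :: "(nat \<Rightarrow> 'a \<Rightarrow> 'a) \<Rightarrow> 'a list set \<Rightarrow> bool" where
  "uvf_preserves \<psi> \<rho> \<longleftrightarrow> apply_uvf \<psi> ` \<rho> \<subseteq> \<rho>"

definition key_relation :: "'a set \<Rightarrow> nat \<Rightarrow> 'a list set \<Rightarrow> bool" where
  "key_relation A n \<rho> \<longleftrightarrow> \<rho> \<subseteq> tuples A n \<and>
     (\<exists>\<beta>\<in>tuples A n - \<rho>. \<forall>\<alpha>\<in>tuples A n - \<rho>.
        \<exists>\<psi>. uvf A n \<psi> \<and> uvf_preserves \<psi> \<rho> \<and> apply_uvf \<psi> \<alpha> = \<beta>)"

text \<open>rho is a conjunction of relations of smaller arities: a family C of
  constraints (idx, sigma), where sigma is a relation on A of arity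
  length idx < n applied to the coordinates listed in idx.\<close>
definition decomposable :: "'a set \<Rightarrow> nat \<Rightarrow> 'a list set \<Rightarrow> bool" where
  "decomposable A n \<rho> \<longleftrightarrow>
     (\<exists>C :: (nat list \<times> 'a list set) set.
        (\<forall>(idx, \<sigma>)\<in>C. length idx < n \<and> set idx \<subseteq> {..<n} \<and> \<sigma> \<subseteq> tuples A (length idx)) \<and>
        \<rho> = {xs\<in>tuples A n. \<forall>(idx, \<sigma>)\<in>C. map (\<lambda>i. xs ! i) idx \<in> \<sigma>})"

definition essential :: "'a set \<Rightarrow> nat \<Rightarrow> 'a list set \<Rightarrow> bool" where
  "essential A n \<rho> \<longleftrightarrow> \<rho> \<subseteq> tuples A n \<and> \<not> decomposable A n \<rho>"

definition pattern :: "'a set \<Rightarrow> nat \<Rightarrow> 'a list set \<Rightarrow> (nat \<times> nat) set" where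
  "pattern A n \<rho> = {(i, j). i < n \<and> j < n \<and> (i = j \<or>
     \<not> (\<exists>a\<in>tuples A n. \<exists>bi\<in>A. \<exists>bj\<in>A. a \<notin> \<rho> \<and> a[i := bi] \<in> \<rho> \<and>
          a[j := bj] \<in> \<rho> \<and> a[i := bi, j := bj] \<in> \<rho>))}"

end

theory Submission
  imports Defs
begin

lemma ess_witness:
  assumes ess: "essential A n \<rho>" and n1: "n \<ge> 1"
  shows "\<exists>a\<in>tuples A n - \<rho>. \<forall>k<n. \<exists>b\<in>A. a[k:=b] \<in> \<rho>"
proof (rule ccontr)
  assume H: "\<not> ?thesis"
  have sub: "\<rho> \<subseteq> tuples A n" using ess by (simp add: essential_def)
  define del where "del k = filter (\<lambda>c. c \<noteq> k) [0..<n]" for k :: nat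
  define C where "C = (\<lambda>k. (del k, (\<lambda>x. map ((!) x) (del k)) ` \<rho>)) ` {..<n}"
  have lendel: "k < n \<Longrightarrow> length (del k) = n - 1" for k
  proof -
    assume k: "k < n"
    have "length (del k) = card {c. c < n \<and> c \<noteq> k}"
      unfolding del_def by (subst distinct_card[symmetric]) (auto intro: arg_cong[where f=card])
    also have "{c. c < n \<and> c \<noteq> k} = {..<n} - {k}" by auto
    also have "card \<dots> = n - 1" using k by simp
    finally show ?thesis .
  qed
  have "decomposable A n \<rho>"
    unfolding decomposable_def
  proof (intro exI[of _ C] conjI)
    show "\<forall>(idx, \<sigma>)\<in>C. length idx < n \<and> set idx \<subseteq> {..<n} \<and> \<sigma> \<subseteq> tuples A (length idx)"
    proof (clarsimp simp: C_def)
      fix k assume k: "k < n"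
      show "length (del k) < n \<and> set (del k) \<subseteq> {..<n} \<and>
           (\<lambda>x. map ((!) x) (del k)) ` \<rho> \<subseteq> tuples A (length (del k))"
      proof (intro conjI)
        show "length (del k) < n" using lendel[OF k] n1 by simp
        show "set (del k) \<subseteq> {..<n}" by (auto simp: del_def)
        show "(\<lambda>x. map ((!) x) (del k)) ` \<rho> \<subseteq> tuples A (length (del k))"
        proof
          fix y assume "y \<in> (\<lambda>x. map ((!) x) (del k)) ` \<rho>"
          then obtain x where x: "x \<in> \<rho>" "y = map ((!) x) (del k)" by auto
          have "x \<in> tuples A n" using x sub by auto
          then show "y \<in> tuples A (length (del k))" using x
            by (fastforce simp: tuples_def del_def)
        qed
      qed
    qed
    show "\<rho> = {xs \<in> tuples A n. \<forall>(idx, \<sigma>)\<in>C. map ((!) xs) idx \<in> \<sigma>}"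
    proof
      show "\<rho> \<subseteq> {xs \<in> tuples A n. \<forall>(idx, \<sigma>)\<in>C. map ((!) xs) idx \<in> \<sigma>}"
      proof
        fix x assume x: "x \<in> \<rho>"
        have "\<forall>(idx, \<sigma>)\<in>C. map ((!) x) idx \<in> \<sigma>"
          unfolding C_def using x by blast
        then show "x \<in> {xs \<in> tuples A n. \<forall>(idx, \<sigma>)\<in>C. map ((!) xs) idx \<in> \<sigma>}"
          using x sub by blast
      qed
      show "{xs \<in> tuples A n. \<forall>(idx, \<sigma>)\<in>C. map ((!) xs) idx \<in> \<sigma>} \<subseteq> \<rho>"
      proof (rule subsetI, rule ccontr)
        fix xs assume xs: "xs \<in> {xs \<in> tuples A n. \<forall>(idx, \<sigma>)\<in>C. map ((!) xs) idx \<in> \<sigma>}"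
          and nr: "xs \<notin> \<rho>"
        have xt0: "xs \<in> tuples A n - \<rho>" using xs nr by simp
        have "\<not> (\<forall>k<n. \<exists>b\<in>A. xs[k:=b] \<in> \<rho>)"
        proof
          assume "\<forall>k<n. \<exists>b\<in>A. xs[k:=b] \<in> \<rho>"
          with xt0 have "\<exists>a\<in>tuples A n - \<rho>. \<forall>k<n. \<exists>b\<in>A. a[k:=b] \<in> \<rho>" by (rule bexI[rotated])
          with H show False by contradiction
        qed
        then obtain k where k: "k < n" and nb: "\<forall>b\<in>A. xs[k:=b] \<notin> \<rho>" by blast
        have "map ((!) xs) (del k) \<in> (\<lambda>x. map ((!) x) (del k)) ` \<rho>"
        proof -
          have "(del k, (\<lambda>x. map ((!) x) (del k)) ` \<rho>) \<in> C" using k by (simp add: C_def)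
          with xs show ?thesis by fastforce
        qed
        then obtain x where x: "x \<in> \<rho>" "map ((!) xs) (del k) = map ((!) x) (del k)" by auto
        have xt: "x \<in> tuples A n" using x sub by auto
        have lx: "length xs = n" using xs by (simp add: tuples_def)
        have "x = xs[k := x ! k]"
        proof (rule nth_equalityI)
          show "length x = length (xs[k := x ! k])" using xt lx by (simp add: tuples_def)
          fix c assume "c < length x"
          then have c: "c < n" using xt by (simp add: tuples_def)
          show "x ! c = xs[k := x ! k] ! c"
          proof (cases "c = k")
            case True then show ?thesis using lx k by simp
          next
            case False
            then have "c \<in> set (del k)" using c by (simp add: del_def)
            then have "xs ! c = x ! c" using x(2) by (metis (mono_tags, lifting) map_eq_conv)
            then show ?thesis using False by simp
          qed
        qed
        moreover have "x ! k \<in> A" using xt k by (auto simp: tuples_def)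
        ultimately show False using nb x(1) by metis
      qed
    qed
  qed
  then show False using ess by (simp add: essential_def)
qed


lemma idem_NU:
  assumes "near_unanimity A m f" "x \<in> A" shows "f (replicate m x) = x"
proof -
  have "f ((replicate m x)[0 := x]) = x" using assms unfolding near_unanimity_def by auto
  moreover have "m > 0" using assms unfolding near_unanimity_def by auto
  then have "(replicate m x)[0 := x] = replicate m x" by (simp add: list_update_same_conv)
  ultimately show ?thesis by simp
qed

locale ctx =
  fixes A :: "'a set" and n :: nat and \<rho> :: "'a list set" and \<beta> :: "'a list" and i j l :: nat
  assumes lenb: "length \<beta> = n" and setb: "set \<beta> \<subseteq> A"
    and ij: "i \<noteq> j" and il: "i \<noteq> l" and jl: "j \<noteq> l"
    and lti: "i < n" and ltj: "j < n" and ltl: "l < n"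
begin

definition T where
  "T x y z = map (\<lambda>c. if c = i then x else if c = j then y else if c = l then z else \<beta> ! c) [0..<n]"

lemma T_len[simp]: "length (T x y z) = n" by (simp add: T_def)

lemma T_nth: "c < n \<Longrightarrow> T x y z ! c = (if c = i then x else if c = j then y else if c = l then z else \<beta> ! c)"
  by (simp add: T_def)

lemma T_upd_i[simp]: "(T x y z)[i := x'] = T x' y z"
  by (rule nth_equalityI) (auto simp: T_nth nth_list_update lti)

lemma T_upd_j[simp]: "(T x y z)[j := y'] = T x y' z"
  using ij by (intro nth_equalityI) (auto simp: T_nth nth_list_update ltj)

lemma T_upd_l[simp]: "(T x y z)[l := z'] = T x y z'"
  using il jl by (intro nth_equalityI) (auto simp: T_nth nth_list_update ltl)

lemma beta_T: "\<beta> = T (\<beta>!i) (\<beta>!j) (\<beta>!l)"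
  by (rule nth_equalityI) (auto simp: T_nth lenb)

lemma T_tuples: "x \<in> A \<Longrightarrow> y \<in> A \<Longrightarrow> z \<in> A \<Longrightarrow> T x y z \<in> tuples A n"
  using setb lenb by (auto simp: tuples_def T_def)

lemma beta_in: "c < n \<Longrightarrow> \<beta> ! c \<in> A"
  using setb lenb by (auto dest: nth_mem)

lemma apply_op_T:
  assumes idem: "\<And>x. x \<in> A \<Longrightarrow> f (replicate m x) = x"
  shows "apply_op n f (map (\<lambda>t. T (X t) (Y t) (Z t)) [0..<m]) =
         T (f (map X [0..<m])) (f (map Y [0..<m])) (f (map Z [0..<m]))"
proof (rule nth_equalityI)
  show "length (apply_op n f (map (\<lambda>t. T (X t) (Y t) (Z t)) [0..<m])) =
        length (T (f (map X [0..<m])) (f (map Y [0..<m])) (f (map Z [0..<m])))"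
    by (simp add: apply_op_def)
  fix c assume "c < length (apply_op n f (map (\<lambda>t. T (X t) (Y t) (Z t)) [0..<m]))"
  then have c: "c < n" by (simp add: apply_op_def)
  have "apply_op n f (map (\<lambda>t. T (X t) (Y t) (Z t)) [0..<m]) ! c
        = f (map (\<lambda>t. T (X t) (Y t) (Z t) ! c) [0..<m])"
    using c by (simp add: apply_op_def comp_def)
  also have "\<dots> = f (map (\<lambda>t. if c = i then X t else if c = j then Y t else if c = l then Z t else \<beta> ! c) [0..<m])"
    using c by (simp add: T_nth)
  also have "\<dots> = T (f (map X [0..<m])) (f (map Y [0..<m])) (f (map Z [0..<m])) ! c"
    using c idem[OF beta_in[OF c]] by (simp add: T_nth map_replicate_const)
  finally show "apply_op n f (map (\<lambda>t. T (X t) (Y t) (Z t)) [0..<m]) ! c =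
        T (f (map X [0..<m])) (f (map Y [0..<m])) (f (map Z [0..<m])) ! c" .
qed

lemma apply_uvf_T:
  assumes "\<And>c. c < n \<Longrightarrow> c \<noteq> i \<Longrightarrow> c \<noteq> j \<Longrightarrow> c \<noteq> l \<Longrightarrow> \<psi> c (\<beta>!c) = \<beta>!c"
  shows "apply_uvf \<psi> (T x y z) = T (\<psi> i x) (\<psi> j y) (\<psi> l z)"
  by (rule nth_equalityI) (auto simp: apply_uvf_def T_nth assms)

lemma closure:
  assumes pat: "(i, j) \<in> pattern A n \<rho>"
    and A: "x \<in> A" "y \<in> A" "z \<in> A" "x' \<in> A" "y' \<in> A"
    and r: "T x' y z \<in> \<rho>" "T x y' z \<in> \<rho>" "T x' y' z \<in> \<rho>"
  shows "T x y z \<in> \<rho>"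
proof (rule ccontr)
  assume nr: "T x y z \<notin> \<rho>"
  have ex: "\<exists>a\<in>tuples A n. \<exists>bi\<in>A. \<exists>bj\<in>A. a \<notin> \<rho> \<and> a[i := bi] \<in> \<rho> \<and>
          a[j := bj] \<in> \<rho> \<and> a[i := bi, j := bj] \<in> \<rho>"
    using T_tuples[OF A(1-3)] A nr r by fastforce
  have "\<not> (\<exists>a\<in>tuples A n. \<exists>bi\<in>A. \<exists>bj\<in>A. a \<notin> \<rho> \<and> a[i := bi] \<in> \<rho> \<and>
          a[j := bj] \<in> \<rho> \<and> a[i := bi, j := bj] \<in> \<rho>)"
    using pat ij unfolding pattern_def by blast
  then show False using ex by blast
qed


lemma main_contra:
  assumes pat: "(i, j) \<in> pattern A n \<rho>"
    and nu: "near_unanimity A m f" and op: "op_preserves n m f \<rho>"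
    and sub: "\<rho> \<subseteq> tuples A n" and bnot: "\<beta> \<notin> \<rho>"
    and key: "\<forall>\<alpha>\<in>tuples A n - \<rho>. \<exists>\<psi>. uvf A n \<psi> \<and> uvf_preserves \<psi> \<rho> \<and> apply_uvf \<psi> \<alpha> = \<beta>"
    and ess: "\<forall>k<n. \<exists>c\<in>A. \<beta>[k:=c] \<in> \<rho>"
  shows False
proof -
  define p where "p = \<beta>!i"
  define q where "q = \<beta>!j"
  define r where "r = \<beta>!l"
  have pA: "p \<in> A" "q \<in> A" "r \<in> A" using beta_in lti ltj ltl by (auto simp: p_def q_def r_def)
  have bT: "\<beta> = T p q r" using beta_T by (simp add: p_def q_def r_def)
  obtain ci where ci: "ci \<in> A" "T ci q r \<in> \<rho>" using ess lti bT by (metis T_upd_i)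
  obtain cj where cj: "cj \<in> A" "T p cj r \<in> \<rho>" using ess ltj bT by (metis T_upd_j)
  obtain s where sA: "s \<in> A" "T p q s \<in> \<rho>" using ess ltl bT by (metis T_upd_l)
  have bnot': "T p q r \<notin> \<rho>" using bnot bT by simp
  have F2: "T ci cj r \<notin> \<rho>"
  proof
    assume "T ci cj r \<in> \<rho>"
    then have "T p q r \<in> \<rho>" using closure[OF pat pA(1,2,3) ci(1) cj(1)] ci cj by blast
    then show False using bnot' by simp
  qed
  have "T ci cj r \<in> tuples A n - \<rho>" using F2 T_tuples ci cj pA by blast
  then obtain \<psi> where psi: "uvf A n \<psi>" "uvf_preserves \<psi> \<rho>" "apply_uvf \<psi> (T ci cj r) = \<beta>"
    using key by blast
  have nthpsi: "\<psi> c (T ci cj r ! c) = \<beta> ! c" if "c < n" for c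
  proof -
    have "apply_uvf \<psi> (T ci cj r) ! c = \<psi> c (T ci cj r ! c)" using that by (simp add: apply_uvf_def)
    then show ?thesis using psi(3) by simp
  qed
  have oth: "\<psi> c (\<beta>!c) = \<beta>!c" if "c < n" "c \<noteq> i" "c \<noteq> j" "c \<noteq> l" for c
    using nthpsi[OF that(1)] that by (simp add: T_nth)
  have psii: "\<psi> i ci = p" using nthpsi[OF lti] by (simp add: T_nth lti p_def)
  have psij: "\<psi> j cj = q" using nthpsi[OF ltj] ij by (simp add: T_nth ltj q_def)
  have psil: "\<psi> l r = r" using nthpsi[OF ltl] il jl by (simp add: T_nth ltl r_def)
  have pres: "apply_uvf \<psi> x \<in> \<rho>" if "x \<in> \<rho>" for x using psi(2) that by (auto simp: uvf_preserves_def)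
  have psiA: "\<psi> c x \<in> A" if "c < n" "x \<in> A" for c x using psi(1) that by (auto simp: uvf_def)
  have aT: "apply_uvf \<psi> (T x y z) = T (\<psi> i x) (\<psi> j y) (\<psi> l z)" for x y z
    by (rule apply_uvf_T) (rule oth)
  define p' where "p' = \<psi> i p"
  define q' where "q' = \<psi> j q"
  define s' where "s' = \<psi> l s"
  have pA': "p' \<in> A" "q' \<in> A" "s' \<in> A" using psiA lti ltj ltl pA sA by (auto simp: p'_def q'_def s'_def)
  have E1: "T p' q r \<in> \<rho>" using pres[OF cj(2)] by (simp add: aT psij psil p'_def)
  have E2: "T p q' r \<in> \<rho>" using pres[OF ci(2)] by (simp add: aT psii psil q'_def)
  have E3: "T p' q' s' \<in> \<rho>" using pres[OF sA(2)] by (simp add: aT p'_def q'_def s'_def)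
  have idem: "\<And>x. x \<in> A \<Longrightarrow> f (replicate m x) = x" using idem_NU[OF nu] by blast
  have fA: "f xs \<in> A" if "xs \<in> tuples A m" for xs using nu that by (simp add: near_unanimity_def)
  define V where "V t k = (if k \<le> t then (if even k then p' else q) else (if even k then p else q'))" for t k :: nat
  define Z where "Z t k = (if t = k then (if even k then s' else s) else r)" for t k :: nat
  define lnk where "lnk t k = (if even k then T (V t k) (V t (Suc k)) (Z t k) else T (V t (Suc k)) (V t k) (Z t k))" for t k
  have lnk_in: "lnk t k \<in> \<rho>" for t k
  proof -
    consider "k < t" | "k = t" | "t < k" by linarith
    then show ?thesis
    proof cases
      case 1 then show ?thesis using E1 by (auto simp: lnk_def V_def Z_def)
    next
      case 2 then show ?thesis using E3 sA by (auto simp: lnk_def V_def Z_def)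
    next
      case 3 then show ?thesis using E2 by (auto simp: lnk_def V_def Z_def)
    qed
  qed
  define g where "g k = f (map (\<lambda>t. V t k) [0..<m])" for k
  have gA: "g k \<in> A" for k
  proof -
    have "map (\<lambda>t. V t k) [0..<m] \<in> tuples A m" using pA pA' by (auto simp: tuples_def V_def)
    then show ?thesis unfolding g_def by (rule fA)
  qed
  have Zr: "f (map (\<lambda>t. Z t k) [0..<m]) = r" for k
  proof (cases "k < m")
    case True
    have "map (\<lambda>t. Z t k) [0..<m] = (replicate m r)[k := (if even k then s' else s)]"
      using True by (intro nth_equalityI) (auto simp: Z_def nth_list_update)
    moreover have "(if even k then s' else s) \<in> A" using pA' sA by auto
    ultimately show ?thesis using nu True pA unfolding near_unanimity_def by auto
  next
    case False
    have "map (\<lambda>t. Z t k) [0..<m] = map (\<lambda>t. r) [0..<m]"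
      using False by (intro map_cong) (auto simp: Z_def)
    then show ?thesis using idem pA by (simp add: map_replicate_const)
  qed
  have comb: "apply_op n f (map (\<lambda>t. lnk t k) [0..<m]) \<in> \<rho>" for k
  proof -
    have "length (map (\<lambda>t. lnk t k) [0..<m]) = m \<and> set (map (\<lambda>t. lnk t k) [0..<m]) \<subseteq> \<rho>"
      using lnk_in by auto
    then show ?thesis using op unfolding op_preserves_def by blast
  qed
  have edge_even: "T (g k) (g (Suc k)) r \<in> \<rho>" if "even k" for k
  proof -
    have eq: "map (\<lambda>t. lnk t k) [0..<m] = map (\<lambda>t. T (V t k) (V t (Suc k)) (Z t k)) [0..<m]"
      using that by (simp add: lnk_def)
    have "apply_op n f (map (\<lambda>t. T (V t k) (V t (Suc k)) (Z t k)) [0..<m]) \<in> \<rho>" using comb[of k] unfolding eq .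
    then show ?thesis using apply_op_T[OF idem, of "\<lambda>t. V t k" "\<lambda>t. V t (Suc k)" "\<lambda>t. Z t k"] by (simp add: Zr g_def)
  qed
  have edge_odd: "T (g (Suc k)) (g k) r \<in> \<rho>" if "odd k" for k
  proof -
    have eq: "map (\<lambda>t. lnk t k) [0..<m] = map (\<lambda>t. T (V t (Suc k)) (V t k) (Z t k)) [0..<m]"
      using that by (simp add: lnk_def)
    have "apply_op n f (map (\<lambda>t. T (V t (Suc k)) (V t k) (Z t k)) [0..<m]) \<in> \<rho>" using comb[of k] unfolding eq .
    then show ?thesis using apply_op_T[OF idem, of "\<lambda>t. V t (Suc k)" "\<lambda>t. V t k" "\<lambda>t. Z t k"] by (simp add: Zr g_def)
  qed
  have g0: "g 0 = p'"
  proof -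
    have "map (\<lambda>t. V t 0) [0..<m] = map (\<lambda>t. p') [0..<m]" by (simp add: V_def)
    then show ?thesis using idem pA' by (simp add: g_def map_replicate_const)
  qed
  have gL: "g (2*m) = p"
  proof -
    have "map (\<lambda>t. V t (2*m)) [0..<m] = map (\<lambda>t. p) [0..<m]" by (intro map_cong) (auto simp: V_def)
    then show ?thesis using idem pA by (simp add: g_def map_replicate_const)
  qed
  have good: "if even k then T (g k) q r \<in> \<rho> else T ci (g k) r \<in> \<rho>" for k
  proof (induction k)
    case 0 then show ?case using g0 E1 by simp
  next
    case (Suc k)
    show ?case
    proof (cases "even k")
      case True
      then have h: "T (g k) q r \<in> \<rho>" using Suc by simp
      have "T ci (g (Suc k)) r \<in> \<rho>"
        using closure[OF pat ci(1) gA pA(3) gA pA(2)] edge_even[OF True] ci(2) h by blast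
      then show ?thesis using True by simp
    next
      case False
      then have h: "T ci (g k) r \<in> \<rho>" using Suc by simp
      have "T (g (Suc k)) q r \<in> \<rho>"
        using closure[OF pat gA pA(2) pA(3) ci(1) gA] edge_odd[OF False] ci(2) h by blast
      then show ?thesis using False by simp
    qed
  qed
  have "T p q r \<in> \<rho>" using good[of "2*m"] gL by simp
  then show False using bnot' by simp
qed

end


lemma apply_uvf_upd:
  "k < length a \<Longrightarrow> apply_uvf \<psi> (a[k := b]) = (apply_uvf \<psi> a)[k := \<psi> k b]"
  by (rule nth_equalityI) (auto simp: apply_uvf_def nth_list_update)

theorem mainTheorem7:
  fixes A :: "'a set" and n m :: nat and \<rho> :: "'a list set" and f :: "'a list \<Rightarrow> 'a"
  assumes "finite A"
    and "n \<ge> 3"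
    and "\<rho> \<subseteq> tuples A n"
    and "essential A n \<rho>"
    and "key_relation A n \<rho>"
    and "near_unanimity A m f"
    and "op_preserves n m f \<rho>"
  shows "pattern A n \<rho> = Id_on {..<n}"
proof
  show "Id_on {..<n} \<subseteq> pattern A n \<rho>" by (auto simp: pattern_def Id_on_def)
  show "pattern A n \<rho> \<subseteq> Id_on {..<n}"
  proof
    fix x assume xp: "x \<in> pattern A n \<rho>"
    obtain i j where x: "x = (i, j)" by (cases x)
    have ltij: "i < n" "j < n" using xp x by (auto simp: pattern_def)
    show "x \<in> Id_on {..<n}"
    proof (cases "i = j")
      case True then show ?thesis using x ltij by (simp add: Id_on_def)
    next
      case False
      obtain a where a: "a \<in> tuples A n - \<rho>" and aw: "\<forall>k<n. \<exists>b\<in>A. a[k:=b] \<in> \<rho>"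
        using ess_witness[OF assms(4)] assms(2) by auto
      obtain \<beta> where b: "\<beta> \<in> tuples A n - \<rho>" and key:
        "\<forall>\<alpha>\<in>tuples A n - \<rho>. \<exists>\<psi>. uvf A n \<psi> \<and> uvf_preserves \<psi> \<rho> \<and> apply_uvf \<psi> \<alpha> = \<beta>"
        using assms(5) unfolding key_relation_def by blast
      obtain \<psi> where psi: "uvf A n \<psi>" "uvf_preserves \<psi> \<rho>" "apply_uvf \<psi> a = \<beta>"
        using key a by blast
      have la: "length a = n" using a by (simp add: tuples_def)
      have essb: "\<forall>k<n. \<exists>c\<in>A. \<beta>[k:=c] \<in> \<rho>"
      proof (intro allI impI)
        fix k assume k: "k < n"
        obtain b where bA: "b \<in> A" "a[k:=b] \<in> \<rho>" using aw k by blast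
        have "apply_uvf \<psi> (a[k:=b]) \<in> \<rho>" using psi(2) bA(2) by (auto simp: uvf_preserves_def)
        then have "\<beta>[k := \<psi> k b] \<in> \<rho>" using apply_uvf_upd[of k a \<psi> b] la k psi(3) by simp
        moreover have "\<psi> k b \<in> A" using psi(1) k bA(1) by (auto simp: uvf_def)
        ultimately show "\<exists>c\<in>A. \<beta>[k:=c] \<in> \<rho>" by blast
      qed
      define l where "l = (if 0 \<noteq> i \<and> 0 \<noteq> j then 0 else if 1 \<noteq> i \<and> 1 \<noteq> j then 1 else (2::nat))"
      have l: "l \<noteq> i" "l \<noteq> j" "l < n" using assms(2) False by (auto simp: l_def)
      have c: "ctx A n \<beta> i j l"
        using b False l ltij by (unfold_locales) (auto simp: tuples_def)
      have False
        using ctx.main_contra[OF c, of \<rho> m f] xp x assms(6,7,3) b key essb by auto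
      then show ?thesis ..
    qed
  qed
qed

end
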